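(* \[ \sum_{k=1}^{\infty}(-1)^k(4k+1)\frac{(\tfrac{1}{2})_k^3}{k!^3}\sum_{i=1}^{2k}\frac{(-1)^i}{i^2}=\frac{\pi}{12}. \]
   Context: For a complex number $x$ and a nonnegative integer $n$, $(x)_n=\Gamma(x+n)/\Gamma(x)=x(x+1)\cdots(x+n-1)$ denotes the shifted factorial (Pochhammer symbol), with $(x)_0=1$. The series is understood as the limit of its partial sums. *)

theory Defs
  imports "HOL-Analysis.Analysis"
begin

end

theory Submission
  imports Defs "HOL-Real_Asymp.Real_Asymp"
begin

definition E :: "nat \<Rightarrow> real \<Rightarrow> nat \<Rightarrow> real" where
"E m x k = pochhammer (real m + 1/2) k * pochhammer (1/2 + x) k * pochhammer (1/2 - x) k
   / (fact k * pochhammer (real m + 1 - x) k * pochhammer (real m + 1 + x) k)"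

definition tt :: "nat \<Rightarrow> real \<Rightarrow> nat \<Rightarrow> real" where
"tt m x k = (-1)^k * ((real m + 1/2 + 2*real k)/(real m + 1/2)) * E m x k"

definition GG :: "nat \<Rightarrow> real \<Rightarrow> nat \<Rightarrow> real" where
"GG m x k = - (real k / (real m + 1/2)) * (-1)^k * E m x k"

definition lam :: "nat \<Rightarrow> real \<Rightarrow> real" where
"lam m x = (real m + 3/2)*(real m + 1/2)/((real m + 1 - x)*(real m + 1 + x))"

lemma poch_pos_aux: "0 < a \<Longrightarrow> 0 < pochhammer (a::real) k"
  by (rule pochhammer_pos)

lemma E_Suc:
  assumes "\<bar>x\<bar> < 1"
  shows "E m x (Suc k) = E m x k * ((real m + 1/2 + k)*(1/2 + x + k)*(1/2 - x + k)
     / ((k+1)*(real m + 1 - x + k)*(real m + 1 + x + k)))"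
proof -
  have p1: "0 < pochhammer (real m + 1 - x) k" using assms by (intro pochhammer_pos) auto
  have p2: "0 < pochhammer (real m + 1 + x) k" using assms by (intro pochhammer_pos) auto
  have d1: "0 < real m + 1 - x + k" "0 < real m + 1 + x + k" using assms by auto
  show ?thesis unfolding E_def pochhammer_Suc fact_Suc
    using p1 p2 d1 by (simp add: field_simps)
qed

lemma poch_shift: "a \<noteq> 0 \<Longrightarrow> pochhammer ((a::real) + 1) k = pochhammer a k * (a + k) / a"
  using pochhammer_rec[of a k] pochhammer_Suc[of a k] by (simp add: field_simps)

lemma E_mSuc:
  assumes "\<bar>x\<bar> < 1"
  shows "E (Suc m) x k = E m x k * ((real m + 1/2 + k)/(real m + 1/2))
          * ((real m + 1 - x)*(real m + 1 + x) / ((real m + 1 - x + k)*(real m + 1 + x + k)))"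
proof -
  have p1: "0 < pochhammer (real m + 1 - x) k" using assms by (intro pochhammer_pos) auto
  have p2: "0 < pochhammer (real m + 1 + x) k" using assms by (intro pochhammer_pos) auto
  have d1: "0 < real m + 1 - x" "0 < real m + 1 + x" using assms by auto
  have d2: "0 < real m + 1 - x + k" "0 < real m + 1 + x + k" using assms by auto
  have e1: "pochhammer (real (Suc m) + 1/2) k = pochhammer (real m + 1/2) k * (real m + 1/2 + k)/(real m + 1/2)"
    using poch_shift[of "real m + 1/2" k] by (simp add: add_ac)
  have e2: "pochhammer (real (Suc m) + 1 - x) k = pochhammer (real m + 1 - x) k * (real m + 1 - x + k)/(real m + 1 - x)"
    using poch_shift[of "real m + 1 - x" k] d1 by (simp add: algebra_simps)
  have e3: "pochhammer (real (Suc m) + 1 + x) k = pochhammer (real m + 1 + x) k * (real m + 1 + x + k)/(real m + 1 + x)"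
    using poch_shift[of "real m + 1 + x" k] d1 by (simp add: algebra_simps)
  show ?thesis unfolding E_def e1 e2 e3
    using p1 p2 d1 d2 by (simp add: field_simps)
qed

lemma key_alg:
  fixes a k x s e p1 p2 q1 q2 :: real
  assumes "0 < p1" "0 < p2" "0 < a" "0 \<le> k" "0 < q1" "0 < q2"
   and dq: "p1 = a + 1/2 - x" "p2 = a + 1/2 + x" "q1 = a + 1/2 - x + k" "q2 = a + 1/2 + x + k"
  shows "s * ((a + 2*k)/a) * e - ((a+1)*a/(p1*p2)) * (s * ((a + 1 + 2*k)/(a+1)) *
     (e * ((a + k)/a) * (p1*p2 / (q1*q2))))
   = - ((k+1)/a) * (-s) * (e * ((a + k)*(1/2 + x + k)*(1/2 - x + k)
     / ((k+1)*q1*q2))) - (- (k/a) * s * e)"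
proof -
  have nz: "a \<noteq> 0" "a + 1 \<noteq> 0" "k + 1 \<noteq> 0" "p1 \<noteq> 0" "p2 \<noteq> 0" "q1 \<noteq> 0" "q2 \<noteq> 0"
    using assms by auto
  have 1: "((a+1)*a/(p1*p2)) * (s * ((a + 1 + 2*k)/(a+1)) * (e * ((a + k)/a) * (p1*p2 / (q1*q2))))
     = s * e * ((a + 1 + 2*k) * (a + k) / (q1 * q2))"
  proof -
    have "\<And>b c d. b \<noteq> 0 \<Longrightarrow> (b*a/(p1*p2)) * (s * (c/b) * (e * (d/a) * (p1*p2 / (q1*q2))))
     = s * e * (c * d / (q1 * q2))" using nz by (simp add: field_simps)
    from this[OF nz(2)] show ?thesis .
  qed
  have 2: "- ((k+1)/a) * (-s) * (e * ((a + k)*(1/2 + x + k)*(1/2 - x + k) / ((k+1)*q1*q2))) - (- (k/a) * s * e)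
     = s * e * ((a + k)*(1/2 + x + k)*(1/2 - x + k) / (a*q1*q2) + k / a)"
  proof -
    have "\<And>b c. b \<noteq> 0 \<Longrightarrow> - (b/a) * (-s) * (e * (c / (b*q1*q2))) - (- (k/a) * s * e)
     = s * e * (c / (a*q1*q2) + k / a)" using nz by (simp add: field_simps)
    from this[OF nz(3)] show ?thesis by (simp add: mult.assoc)
  qed
  have 3: "(a + 2*k)/a - (a + 1 + 2*k) * (a + k) / (q1 * q2) = (a + k)*(1/2 + x + k)*(1/2 - x + k) / (a*q1*q2) + k / a"
  proof -
    have "(a + 2*k) * (q1 * q2) - a * ((a + 1 + 2*k) * (a + k)) = (a + k)*(1/2 + x + k)*(1/2 - x + k) + k * (q1 * q2)"
      unfolding dq by algebra
    moreover have "\<And>A C N Q. Q \<noteq> 0 \<Longrightarrow> A * Q - a * C = N + k * Q \<Longrightarrow> A / a - C / Q = N / (a * Q) + k / a"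
      using nz(1) by (simp add: field_simps)
    ultimately show ?thesis using nz by (simp add: mult.assoc)
  qed
  show ?thesis unfolding 1 2 3[symmetric] by (simp add: algebra_simps)
qed

lemma key:
  assumes "\<bar>x\<bar> < 1"
  shows "tt m x k - lam m x * tt (Suc m) x k = GG m x (Suc k) - GG m x k"
proof -
  define a where "a = real m + 1/2"
  define e where "e = E m x k"
  define s where "s = ((-1::real)^k)"
  have t0: "tt m x k = s * ((a+2 * real k)/a) * e" by (simp add: tt_def a_def e_def s_def)
  have t1: "tt (Suc m) x k = s * ((a+1+2 * real k)/(a+1)) * (e * ((a+real k)/a) * ((a+1/2-x) * (a+1/2+x)/((a+1/2-x+real k) * (a+1/2+x+real k))))"
    unfolding tt_def E_mSuc[OF assms] a_def e_def s_def by (simp add: algebra_simps)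
  have l: "lam m x = (a+1) * a/((a+1/2-x) * (a+1/2+x))"
    unfolding lam_def a_def by (simp add: algebra_simps)
  have g1: "GG m x (Suc k) = -((real k+1)/a) * (-s) * (e * ((a+k) * (1/2+x+k) * (1/2-x+k)/((real k+1) * (a+1/2-x+k) * (a+1/2+x+k))))"
    unfolding GG_def E_Suc[OF assms] a_def e_def s_def by (simp add: algebra_simps)
  have g0: "GG m x k = -(real k/a) * s * e" by (simp add: GG_def a_def e_def s_def)
  have pos: "0 < a + 1/2 - x" "0 < a + 1/2 + x" "0 < a" "0 \<le> real k" "0 < a + 1/2 - x + real k" "0 < a + 1/2 + x + real k"
    using assms by (auto simp: a_def)
  show ?thesis unfolding t0 t1 l g1 g0
    by (rule key_alg[OF pos]) simp_all
qed

definition PS :: "nat \<Rightarrow> real \<Rightarrow> nat \<Rightarrow> real" where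
  "PS m x N = (\<Sum>k<N. tt m x k)"

definition Lam :: "nat \<Rightarrow> real \<Rightarrow> real" where
  "Lam M x = (\<Prod>i<M. lam i x)"

lemma rec_sum:
  assumes "\<bar>x\<bar> < 1"
  shows "PS m x N = lam m x * PS (Suc m) x N + GG m x N"
proof -
  have "(\<Sum>k<N. tt m x k - lam m x * tt (Suc m) x k) = (\<Sum>k<N. GG m x (Suc k) - GG m x k)"
    using key[OF assms] by simp
  also have "\<dots> = GG m x N - GG m x 0" by (rule sum_lessThan_telescope)
  also have "GG m x 0 = 0" by (simp add: GG_def)
  finally show ?thesis unfolding PS_def by (simp add: sum_subtractf sum_distrib_left)
qed

lemma rec_M:
  assumes "\<bar>x\<bar> < 1"
  shows "PS 0 x N = Lam M x * PS M x N + (\<Sum>j<M. Lam j x * GG j x N)"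
proof (induction M)
  case 0
  then show ?case by (simp add: Lam_def)
next
  case (Suc M)
  have "Lam (Suc M) x = Lam M x * lam M x" by (simp add: Lam_def)
  then show ?case using Suc rec_sum[OF assms, of M N] by (simp add: algebra_simps)
qed

lemma lam_gen:
  fixes t x :: real
  assumes "0 < t - x" "0 < t + x" "1 \<le> t"
  shows "(t + 1/2) * (t - 1/2) / ((t - x) * (t + x)) = inverse ((4 * t^2 / (4 * t^2 - 1)) * (1 - x^2 / t^2))"
proof -
  have t2: "0 < t^2" using assms by simp
  have "1 \<le> t * t" using assms mult_mono[of 1 t 1 t] by simp
  then have q: "0 < 4 * t^2 - 1" by (simp add: power2_eq_square)
  have r0: "1 - x^2/t^2 = (t^2 - x^2)/t^2" using t2 by (simp add: diff_divide_distrib)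
  have r1: "t^2 - x^2 = (t-x)*(t+x)" by (simp add: algebra_simps power2_eq_square)
  have r: "1 - x^2/t^2 = (t-x)*(t+x)/t^2" using r0 r1 by simp
  have "inverse ((4 * t^2 / (4 * t^2 - 1)) * ((t-x)*(t+x)/t^2)) = (4 * t^2 - 1) / (4 * ((t-x)*(t+x)))"
  proof -
    have "\<And>(T::real) (u::real) (v::real). T \<noteq> 0 \<Longrightarrow> 4*T-1 \<noteq> 0 \<Longrightarrow> u \<noteq> 0 \<Longrightarrow> v \<noteq> 0 \<Longrightarrow>
       inverse ((4 * T / (4 * T - 1)) * (u * v/T)) = (4 * T - 1) / (4 * (u * v))"
      by (simp add: field_simps)
    from this[of "t^2" "t-x" "t+x"] show ?thesis using t2 q assms by simp
  qed
  moreover have "4 * t^2 - 1 = 4 * ((t + 1/2) * (t - 1/2))" by (simp add: algebra_simps power2_eq_square)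
  ultimately have "inverse ((4 * t^2 / (4 * t^2 - 1)) * ((t-x)*(t+x)/t^2)) = (t + 1/2) * (t - 1/2) / ((t-x)*(t+x))"
    by simp
  then show ?thesis unfolding r by simp
qed

lemma lam_alt:
  assumes "\<bar>x\<bar> < 1"
  shows "lam M x = inverse ((4 * (real M + 1)^2 / (4 * (real M + 1)^2 - 1)) * (1 - x^2 / (real M + 1)^2))"
proof -
  have "lam M x = (real M + 1 + 1/2) * (real M + 1 - 1/2) / ((real M + 1 - x) * (real M + 1 + x))"
    unfolding lam_def by (simp add: algebra_simps)
  also have "\<dots> = inverse ((4 * (real M + 1)^2 / (4 * (real M + 1)^2 - 1)) * (1 - x^2 / (real M + 1)^2))"
    by (rule lam_gen) (use assms in auto)
  finally show ?thesis .
qed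

lemma Lam_eq:
  assumes "\<bar>x\<bar> < 1"
  shows "Lam M x = inverse ((\<Prod>k=1..M. 4*real k^2 / (4*real k^2 - 1)) * (\<Prod>k=1..M. 1 - x^2 / real k^2))"
proof (induction M)
  case 0
  then show ?case by (simp add: Lam_def)
next
  case (Suc M)
  have "Lam (Suc M) x = Lam M x * lam M x" by (simp add: Lam_def)
  also have "\<dots> = inverse ((\<Prod>k=1..Suc M. 4*real k^2 / (4*real k^2 - 1)) * (\<Prod>k=1..Suc M. 1 - x^2 / real k^2))"
  proof -
    have gen: "\<And>A B c d :: real. inverse (A*B) * inverse (c*d) = inverse ((c*A)*(d*B))"
      by (simp add: inverse_mult_distrib mult_ac)
    show ?thesis unfolding Suc lam_alt[OF assms] gen
      by (simp add: prod.nat_ivl_Suc' add_ac)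
  qed
  finally show ?case .
qed

definition rho :: "nat \<Rightarrow> real \<Rightarrow> nat \<Rightarrow> real" where
  "rho m x k = (real m + 1/2 + k) * (1/2 + x + k) * (1/2 - x + k) / ((k+1) * (real m + 1 - x + k) * (real m + 1 + x + k))"

lemma E_Suc': "\<bar>x\<bar> < 1 \<Longrightarrow> E m x (Suc k) = E m x k * rho m x k"
  unfolding rho_def by (rule E_Suc)

lemma E_0 [simp]: "E m x 0 = 1" by (simp add: E_def)

lemma rho_nonneg: "\<bar>x\<bar> \<le> 1/2 \<Longrightarrow> 0 \<le> rho m x k"
  unfolding rho_def by (intro divide_nonneg_pos mult_nonneg_nonneg mult_pos_pos) auto

lemma E_nonneg: "\<bar>x\<bar> \<le> 1/2 \<Longrightarrow> 0 \<le> E m x k"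
  by (induction k) (auto simp: E_Suc' rho_nonneg)

lemma div_le_div_cross: "0 < b \<Longrightarrow> 0 < d \<Longrightarrow> a * d \<le> c * b \<Longrightarrow> a / b \<le> c / (d::real)"
  by (simp add: divide_simps)

lemma w_step_aux: "0 \<le> (t::real) \<Longrightarrow> 1 / (2 * t + 1) * ((t + 1/2) / (t + 1))^2 \<le> 1 / (2 * (t+1) + 1)"
proof -
  assume t: "0 \<le> t"
  have p: "0 < (2 * t + 1) * (t+1)^2" "0 < 2*(t+1)+1" using t by auto
  have "1 / (2 * t + 1) * ((t + 1/2) / (t + 1))^2 = ((t + 1/2)^2) / ((2 * t + 1) * (t+1)^2)"
    by (simp add: power_divide)
  also have "\<dots> \<le> 1 / (2 * (t+1) + 1)"
    using p t by (intro div_le_div_cross) (auto simp: algebra_simps power2_eq_square)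
  finally show ?thesis .
qed

definition w :: "nat \<Rightarrow> real" where "w k = pochhammer (1/2) k / fact k"

lemma w_Suc: "w (Suc k) = w k * ((k + 1/2) / (real k + 1))"
  unfolding w_def pochhammer_Suc fact_Suc by (simp add: field_simps)

lemma w_nonneg: "0 \<le> w k"
  unfolding w_def by (intro divide_nonneg_pos pochhammer_nonneg) auto

lemma w_sq: "w k ^ 2 \<le> 1 / (2 * real k + 1)"
proof (induction k)
  case 0
  then show ?case by (simp add: w_def)
next
  case (Suc k)
  have "w (Suc k) ^ 2 = w k ^ 2 * ((k + 1/2) / (real k + 1))^2" by (simp only: w_Suc power_mult_distrib)
  also have "\<dots> \<le> 1 / (2 * real k + 1) * ((k + 1/2) / (real k + 1))^2"
    by (rule mult_right_mono[OF Suc]) simp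
  also have "\<dots> \<le> 1 / (2 * real (Suc k) + 1)"
    using w_step_aux[of "real k"] by simp
  finally show ?case .
qed

lemma rho_le_cube:
  assumes "\<bar>x\<bar> \<le> 1/2"
  shows "rho m x k \<le> ((k + 1/2) / (real k + 1))^3"
proof -
  define K where "K = real k + 1"
  define u where "u = real m + real k + 1"
  define y where "y = x^2"
  have K1: "1 \<le> K" and uK: "K \<le> u" by (auto simp: K_def u_def)
  have y0: "0 \<le> y" unfolding y_def by simp
  have "\<bar>x\<bar>^2 \<le> (1/2)^2" by (rule power_mono[OF assms]) simp
  then have y1: "y \<le> 1/4" unfolding y_def by (simp add: power2_eq_square)
  have num: "(1/2 + x + k) * (1/2 - x + k) = (K - 1/2)^2 - y" by (simp add: K_def y_def algebra_simps power2_eq_square)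
  have den: "(real m + 1 - x + k) * (real m + 1 + x + k) = u^2 - y" by (simp add: u_def y_def algebra_simps power2_eq_square)
  have "1 \<le> u^2" using uK K1 by (intro one_le_power) simp
  then have Q: "0 < u^2 - y" using y1 by simp
  have r0: "rho m x k = (real m + 1/2 + k) * ((1/2 + x + k) * (1/2 - x + k)) / ((real k+1) * ((real m + 1 - x + k) * (real m + 1 + x + k)))"
    unfolding rho_def by (simp add: mult.assoc)
  have r: "rho m x k = (u - 1/2) * ((K - 1/2)^2 - y) / (K * (u^2 - y))"
    unfolding r0 num den by (simp add: K_def u_def)
  have key: "(u - 1/2) * ((K - 1/2)^2 - y) * K^3 \<le> (K - 1/2)^3 * (K * (u^2 - y))"
  proof -
    have a1: "0 \<le> (u - K) * (K * u - (u + K)/2)"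
    proof -
      have "1 * u \<le> K * u" using K1 uK by (intro mult_right_mono) auto
      then have "u + K \<le> K * u * 2" using uK by simp
      then show ?thesis using uK K1 by (intro mult_nonneg_nonneg) auto
    qed
    have a2: "(K - 1/2)^3 \<le> (u - 1/2) * K^2"
    proof -
      have "(K - 1/2)^3 \<le> (K - 1/2) * K^2" using K1 by (simp add: power3_eq_cube power2_eq_square mult_mono)
      also have "\<dots> \<le> (u - 1/2) * K^2" using uK by (intro mult_right_mono) auto
      finally show ?thesis .
    qed
    have e: "(K - 1/2)^3 * (K * (u^2 - y)) - (u - 1/2) * ((K - 1/2)^2 - y) * K^3
       = K * ((K - 1/2)^2 * ((u - K) * (K * u - (u + K)/2)) + y * ((u - 1/2) * K^2 - (K - 1/2)^3))"
      by algebra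
    have "0 \<le> K * ((K - 1/2)^2 * ((u - K) * (K * u - (u + K)/2)) + y * ((u - 1/2) * K^2 - (K - 1/2)^3))"
    proof -
      have b1: "0 \<le> (K-1/2)^2 * ((u-K) * (K * u-(u+K)/2))" using a1 by simp
      have b2: "0 \<le> y * ((u-1/2) * K^2 - (K-1/2)^3)" using a2 y0 by simp
      show ?thesis using K1 b1 b2 by simp
    qed
    then show ?thesis using e by linarith
  qed
  have K0: "0 < K" using K1 by simp
  have "(u - 1/2) * ((K - 1/2)^2 - y) / (K * (u^2 - y)) \<le> (K - 1/2)^3 / K^3"
    using key K0 Q by (simp add: divide_simps)
  also have "(K - 1/2)^3 / K^3 = ((k + 1/2) / (real k + 1))^3"
    by (simp add: K_def power_divide add.commute)
  finally show ?thesis using r by simp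
qed

lemma E_le_w3:
  assumes "\<bar>x\<bar> \<le> 1/2"
  shows "E m x k \<le> w k ^ 3"
proof (induction k)
  case 0
  then show ?case by (simp add: w_def)
next
  case (Suc k)
  have x1: "\<bar>x\<bar> < 1" using assms by simp
  have "E m x (Suc k) = E m x k * rho m x k" by (rule E_Suc'[OF x1])
  also have "\<dots> \<le> w k ^ 3 * ((k + 1/2) / (real k + 1))^3"
    by (rule mult_mono[OF Suc rho_le_cube[OF assms]]) (use w_nonneg rho_nonneg[OF assms] in auto)
  also have "\<dots> = w (Suc k) ^ 3" by (simp only: w_Suc power_mult_distrib)
  finally show ?case .
qed

lemma rho_gen_bound:
  assumes "\<bar>x\<bar> \<le> 1/2"
  shows "rho m x k \<le> (real k + 1/2)^2 / ((real k + 1) * (real m + real k + 3/2))"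
proof -
  define K where "K = real k + 1"
  define u where "u = real m + real k + 1"
  define y where "y = x^2"
  have K1: "1 \<le> K" and uK: "K \<le> u" by (auto simp: K_def u_def)
  have y0: "0 \<le> y" unfolding y_def by simp
  have "\<bar>x\<bar>^2 \<le> (1/2)^2" by (rule power_mono[OF assms]) simp
  then have y1: "y \<le> 1/4" unfolding y_def by (simp add: power2_eq_square)
  have num: "(1/2 + x + k) * (1/2 - x + k) = (K - 1/2)^2 - y" by (simp add: K_def y_def algebra_simps power2_eq_square)
  have den: "(real m + 1 - x + k) * (real m + 1 + x + k) = u^2 - y" by (simp add: u_def y_def algebra_simps power2_eq_square)
  have r0: "rho m x k = (real m + 1/2 + k) * ((1/2 + x + k) * (1/2 - x + k)) / ((real k+1) * ((real m + 1 - x + k) * (real m + 1 + x + k)))"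
    unfolding rho_def by (simp add: mult.assoc)
  have r: "rho m x k = (u - 1/2) * ((K - 1/2)^2 - y) / (K * (u^2 - y))"
    unfolding r0 num den by (simp add: K_def u_def)
  have Q: "(u - 1/2) * (u + 1/2) \<le> u^2 - y" using y1 by (simp add: algebra_simps power2_eq_square)
  have Q0: "0 < (u - 1/2) * (u + 1/2)" using uK K1 by simp
  have "(u - 1/2) * ((K - 1/2)^2 - y) / (K * (u^2 - y)) \<le> (u - 1/2) * (K - 1/2)^2 / (K * ((u - 1/2) * (u + 1/2)))"
  proof (rule frac_le)
    show "0 \<le> (u - 1/2) * (K - 1/2)^2" using uK K1 by simp
    show "(u - 1/2) * ((K - 1/2)^2 - y) \<le> (u - 1/2) * (K - 1/2)^2" using uK K1 y0 by simp
    show "0 < K * ((u - 1/2) * (u + 1/2))" using Q0 K1 by simp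
    show "K * ((u - 1/2) * (u + 1/2)) \<le> K * (u^2 - y)" using Q K1 by simp
  qed
  also have "\<dots> = (K - 1/2)^2 / (K * (u + 1/2))"
  proof -
    have g: "\<And>A B C D::real. B \<noteq> 0 \<Longrightarrow> C \<noteq> 0 \<Longrightarrow> D \<noteq> 0 \<Longrightarrow> B * A / (C * (B * D)) = A / (C * D)"
      by simp
    show ?thesis by (rule g) (use uK K1 in auto)
  qed
  also have "\<dots> = (real k + 1/2)^2 / ((real k + 1) * (real m + real k + 3/2))"
    by (simp add: K_def u_def add_ac)
  finally show ?thesis using r by simp
qed

lemma rho_small:
  assumes "\<bar>x\<bar> \<le> 1/2" "2 \<le> m"
  shows "rho m x k \<le> (real k + 1) / (real k + 4)"
proof -
  have "rho m x k \<le> (real k + 1/2)^2 / ((real k + 1) * (real m + real k + 3/2))" by (rule rho_gen_bound[OF assms(1)])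
  also have "\<dots> \<le> (real k + 1/2)^2 / ((real k + 1) * (real k + 7/2))"
    using assms(2) by (intro divide_left_mono mult_left_mono mult_pos_pos) auto
  also have "\<dots> \<le> (real k + 1) / (real k + 4)"
  proof (intro div_le_div_cross)
    have kk: "0 \<le> real k * real k" by simp
    show "0 < (real k + 1) * (real k + 7/2)" by simp
    show "0 < real k + 4" by simp
    show "(real k + 1/2)^2 * (real k + 4) \<le> (real k + 1) * ((real k + 1) * (real k + 7/2))"
    proof -
      have "(real k + 1) * ((real k + 1) * (real k + 7/2)) - (real k + 1/2)^2 * (real k + 4) = 5/2 + 15/4 * real k + 1/2 * real k ^ 2"
        by algebra
      moreover have "0 \<le> 5/2 + 15/4 * real k + 1/2 * real k ^ 2" by simp
      ultimately show ?thesis by linarith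
    qed
  qed
  finally show ?thesis .
qed

lemma rho_zero_bound:
  assumes "\<bar>x\<bar> \<le> 1/2"
  shows "rho m x 0 \<le> 1 / (2 * (real m + 1))"
proof -
  have "rho m x 0 \<le> (1/2)^2 / (1 * (real m + 3/2))" using rho_gen_bound[OF assms, of m 0] by simp
  also have "\<dots> \<le> 1 / (2 * (real m + 1))"
    by (intro div_le_div_cross) (auto simp: algebra_simps power2_eq_square)
  finally show ?thesis .
qed

lemma E_small:
  assumes "\<bar>x\<bar> \<le> 1/2" "2 \<le> m"
  shows "E m x (Suc j) \<le> 12 / ((real m + 1) * (real j + 2) * (real j + 3) * (real j + 4))"
proof (induction j)
  case 0
  have x1: "\<bar>x\<bar> < 1" using assms by simp
  have "E m x (Suc 0) = rho m x 0" using E_Suc'[OF x1, of m 0] by simp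
  also have "\<dots> \<le> 1 / (2 * (real m + 1))" by (rule rho_zero_bound[OF assms(1)])
  also have "\<dots> = 12 / ((real m + 1) * (real 0 + 2) * (real 0 + 3) * (real 0 + 4))" by (simp add: field_simps)
  finally show ?case .
next
  case (Suc j)
  have x1: "\<bar>x\<bar> < 1" using assms by simp
  have "E m x (Suc (Suc j)) = E m x (Suc j) * rho m x (Suc j)" by (rule E_Suc'[OF x1])
  also have "\<dots> \<le> 12 / ((real m + 1) * (real j + 2) * (real j + 3) * (real j + 4)) * ((real (Suc j) + 1) / (real (Suc j) + 4))"
    by (rule mult_mono[OF Suc rho_small[OF assms]]) (use E_nonneg[OF assms(1)] rho_nonneg[OF assms(1)] in auto)
  also have "\<dots> = 12 / ((real m + 1) * (real (Suc j) + 2) * (real (Suc j) + 3) * (real (Suc j) + 4))"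
  proof -
    have g: "\<And>A M P Q R S::real. P \<noteq> 0 \<Longrightarrow> M \<noteq> 0 \<Longrightarrow> Q \<noteq> 0 \<Longrightarrow> R \<noteq> 0 \<Longrightarrow> S \<noteq> 0 \<Longrightarrow>
       A / (M * P * Q * R) * (P / S) = A / (M * Q * R * S)" by simp
    have e: "real (Suc j) + 1 = real j + 2" "real (Suc j) + 2 = real j + 3" "real (Suc j) + 3 = real j + 4"
      "real (Suc j) + 4 = real j + 5" by simp_all
    show ?thesis unfolding e by (rule g) auto
  qed
  finally show ?case .
qed

lemma tt_small:
  assumes "\<bar>x\<bar> \<le> 1/2" "2 \<le> m"
  shows "\<bar>tt m x (Suc j)\<bar> \<le> 24 / (real m + 1) * (1 / (real j + 1)^2)"
proof -
  have a: "1 \<le> real m + 1/2" using assms by simp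
  have "\<bar>tt m x (Suc j)\<bar> = (real m + 1/2 + 2 * real (Suc j)) / (real m + 1/2) * E m x (Suc j)"
    unfolding tt_def using E_nonneg[OF assms(1)] a by (simp add: abs_mult)
  also have "\<dots> \<le> (1 + 2 * real (Suc j)) * (12 / ((real m + 1) * (real j + 2) * (real j + 3) * (real j + 4)))"
  proof (rule mult_mono[OF _ E_small[OF assms]])
    show "(real m + 1/2 + 2 * real (Suc j)) / (real m + 1/2) \<le> 1 + 2 * real (Suc j)"
    proof -
      have "2 * real (Suc j) * 1 \<le> 2 * real (Suc j) * (real m + 1/2)" using a by (intro mult_left_mono) auto
      then have "2 * real (Suc j) / (real m + 1/2) \<le> 2 * real (Suc j)" using a by (simp add: divide_le_eq)
      moreover have "(real m + 1/2 + 2 * real (Suc j)) / (real m + 1/2) = 1 + 2 * real (Suc j) / (real m + 1/2)"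
        using a by (simp add: field_simps)
      ultimately show ?thesis by simp
    qed
  qed (use E_nonneg[OF assms(1)] in auto)
  also have "\<dots> = (12 * (2 * real j + 3) / ((real j + 2) * (real j + 3) * (real j + 4))) / (real m + 1)"
    by (simp add: divide_simps)
  also have "\<dots> \<le> (24 / (real j + 1)^2) / (real m + 1)"
  proof (intro divide_right_mono div_le_div_cross)
    show "0 < (real j + 2) * (real j + 3) * (real j + 4)" by (intro mult_pos_pos) auto
    show "0 < (real j + 1)^2" by simp
    show "0 \<le> real m + 1" by simp
    have "24 * ((real j + 2) * (real j + 3) * (real j + 4)) - 12 * (2 * real j + 3) * (real j + 1)^2 = 540 + 528 * real j + 132 * real j ^ 2"
      by algebra
    moreover have "0 \<le> 540 + 528 * real j + 132 * real j ^ 2" by simp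
    ultimately show "12 * (2 * real j + 3) * (real j + 1)^2 \<le> 24 * ((real j + 2) * (real j + 3) * (real j + 4))" by linarith
  qed
  also have "\<dots> = 24 / (real m + 1) * (1 / (real j + 1)^2)" by simp
  finally show ?thesis .
qed

lemma inv_sq_summable: "summable (\<lambda>j. 1 / (real j + 1)^2)"
  using inverse_squares_sums by (simp add: sums_iff add.commute)

lemma inv_sq_suminf: "(\<Sum>j. 1 / (real j + 1)^2) = pi^2 / 6"
  using inverse_squares_sums by (simp add: sums_iff add.commute)

lemma tt_summable_bound:
  assumes "\<bar>x\<bar> \<le> 1/2" "2 \<le> m"
  shows "summable (tt m x)" "\<bar>suminf (tt m x) - 1\<bar> \<le> 24 / (real m + 1) * (pi^2 / 6)"
proof -
  define g where "g j = 24 / (real m + 1) * (1 / (real j + 1)^2)" for j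
  have gs: "summable g" unfolding g_def by (intro summable_mult inv_sq_summable)
  have gsum: "suminf g = 24 / (real m + 1) * (pi^2 / 6)"
  proof -
    have "suminf g = 24 / (real m + 1) * (\<Sum>j. 1 / (real j + 1)^2)"
      unfolding g_def by (rule suminf_mult[OF inv_sq_summable])
    then show ?thesis using inv_sq_suminf by simp
  qed
  have b: "norm (tt m x (Suc j)) \<le> g j" for j unfolding g_def using tt_small[OF assms] by simp
  have s1: "summable (\<lambda>j. tt m x (Suc j))" by (rule summable_comparison_test'[OF gs b])
  then show "summable (tt m x)" by (simp add: summable_Suc_iff)
  have s2: "summable (\<lambda>j. norm (tt m x (Suc j)))" by (rule summable_comparison_test'[of g]) (use gs b in auto)
  have "(\<lambda>j. tt m x (Suc j)) sums suminf (\<lambda>j. tt m x (Suc j))" using s1 by (rule summable_sums)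
  then have "tt m x sums (suminf (\<lambda>j. tt m x (Suc j)) + tt m x 0)" by (simp add: sums_Suc_iff)
  then have e: "suminf (tt m x) - 1 = suminf (\<lambda>j. tt m x (Suc j))" by (simp add: sums_iff tt_def)
  have "norm (suminf (\<lambda>j. tt m x (Suc j))) \<le> (\<Sum>j. norm (tt m x (Suc j)))" by (rule summable_norm[OF s2])
  also have "\<dots> \<le> suminf g" by (rule suminf_le[OF b s2 gs])
  finally show "\<bar>suminf (tt m x) - 1\<bar> \<le> 24 / (real m + 1) * (pi^2 / 6)" using e gsum by simp
qed

lemma S_lim:
  assumes "\<bar>x\<bar> \<le> 1/2"
  shows "(\<lambda>m. suminf (tt m x)) \<longlonglongrightarrow> 1"
proof -
  have "(\<lambda>m. suminf (tt m x) - 1) \<longlonglongrightarrow> 0"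
  proof (rule Lim_null_comparison)
    show "\<forall>\<^sub>F m in sequentially. norm (suminf (tt m x) - 1) \<le> 24 / (real m + 1) * (pi^2 / 6)"
      using eventually_ge_at_top[of 2] by eventually_elim (use tt_summable_bound(2)[OF assms] in auto)
    show "(\<lambda>m. 24 / (real m + 1) * (pi^2 / 6)) \<longlonglongrightarrow> 0" by real_asymp
  qed
  then show ?thesis by (simp add: LIM_zero_iff)
qed

lemma w_lim: "w \<longlonglongrightarrow> 0"
proof -
  have "(\<lambda>k. w k ^ 2) \<longlonglongrightarrow> 0"
  proof (rule Lim_null_comparison)
    show "\<forall>\<^sub>F k in sequentially. norm (w k ^ 2) \<le> 1 / (2 * real k + 1)"
      using w_sq by simp
    show "(\<lambda>k. 1 / (2 * real k + 1)) \<longlonglongrightarrow> 0" by real_asymp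
  qed
  then have "(\<lambda>k. sqrt (w k ^ 2)) \<longlonglongrightarrow> sqrt 0" by (rule tendsto_real_sqrt)
  then show ?thesis using w_nonneg by simp
qed

lemma GG_lim:
  assumes "\<bar>x\<bar> \<le> 1/2"
  shows "(\<lambda>N. GG m x N) \<longlonglongrightarrow> 0"
proof (rule Lim_null_comparison)
  show "\<forall>\<^sub>F N in sequentially. norm (GG m x N) \<le> w N"
  proof (rule always_eventually, rule allI)
    fix N
    have a: "1/2 \<le> real m + 1/2" by simp
    have "norm (GG m x N) = real N / (real m + 1/2) * E m x N"
      unfolding GG_def using E_nonneg[OF assms] by (simp add: abs_mult)
    also have "\<dots> \<le> (2 * real N) * w N ^ 3"
    proof (rule mult_mono)
      show "real N / (real m + 1/2) \<le> 2 * real N"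
        using a by (simp add: divide_le_eq) (simp add: algebra_simps mult_left_mono)
    qed (use E_le_w3[OF assms] w_nonneg E_nonneg[OF assms] in auto)
    also have "\<dots> = (2 * real N * w N ^ 2) * w N" by (simp add: power3_eq_cube power2_eq_square)
    also have "\<dots> \<le> 1 * w N"
    proof (rule mult_right_mono)
      have "2 * real N * w N ^ 2 \<le> 2 * real N * (1 / (2 * real N + 1))"
        by (intro mult_left_mono w_sq) auto
      also have "\<dots> \<le> 1" by (simp add: divide_simps)
      finally show "2 * real N * w N ^ 2 \<le> 1" .
    qed (use w_nonneg in auto)
    finally show "norm (GG m x N) \<le> w N" by simp
  qed
  show "w \<longlonglongrightarrow> 0" by (rule w_lim)
qed

lemma sums_tt0:
  assumes "\<bar>x\<bar> \<le> 1/2" "2 \<le> M"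
  shows "tt 0 x sums (Lam M x * suminf (tt M x))"
proof -
  have x1: "\<bar>x\<bar> < 1" using assms by simp
  have "(\<lambda>N. Lam M x * PS M x N + (\<Sum>j<M. Lam j x * GG j x N)) \<longlonglongrightarrow> Lam M x * suminf (tt M x) + (\<Sum>j<M. Lam j x * 0)"
    unfolding PS_def
    by (intro tendsto_intros summable_LIMSEQ tt_summable_bound[OF assms] GG_lim[OF assms(1)])
  then have "(\<lambda>N. PS 0 x N) \<longlonglongrightarrow> Lam M x * suminf (tt M x)"
    using rec_M[OF x1] by simp
  then show ?thesis unfolding sums_def PS_def .
qed

definition FF :: "real \<Rightarrow> real" where
  "FF x = (if x = 0 then 2 / pi else 2 * x / sin (pi * x))"

lemma sin_pix_nz:
  assumes "\<bar>x\<bar> \<le> 1/2" "x \<noteq> 0"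
  shows "sin (pi * x) \<noteq> 0"
proof
  assume "sin (pi * x) = 0"
  moreover have "\<bar>pi * x\<bar> < pi"
  proof -
    have "pi * \<bar>x\<bar> \<le> pi * (1/2)" using assms by (intro mult_left_mono) auto
    then show ?thesis using pi_gt_zero by (simp add: abs_mult)
  qed
  then have "- pi < pi * x" "pi * x < pi" by (auto simp: abs_less_iff)
  ultimately have "pi * x = 0" using sin_eq_0_pi by blast
  with assms show False by simp
qed

lemma Lam_lim:
  assumes "\<bar>x\<bar> \<le> 1/2"
  shows "(\<lambda>M. Lam M x) \<longlonglongrightarrow> FF x"
proof -
  have x1: "\<bar>x\<bar> < 1" using assms by simp
  have W: "(\<lambda>n. \<Prod>k=1..n. (4*real k^2) / (4*real k^2 - 1)) \<longlonglongrightarrow> pi / 2" by (rule wallis)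
  show ?thesis
  proof (cases "x = 0")
    case True
    have "(\<lambda>M. inverse ((\<Prod>k=1..M. 4*real k^2 / (4*real k^2 - 1)) * 1)) \<longlonglongrightarrow> inverse (pi / 2 * 1)"
      by (rule tendsto_inverse[OF tendsto_mult[OF W tendsto_const]]) simp
    moreover have "(\<lambda>M. Lam M x) = (\<lambda>M. inverse ((\<Prod>k=1..M. 4*real k^2 / (4*real k^2 - 1)) * 1))"
      by (rule ext) (use Lam_eq[OF x1] True in simp)
    moreover have "inverse (pi / 2 * 1) = FF x" using True by (simp add: FF_def)
    ultimately show ?thesis by metis
  next
    case False
    have s: "sin (pi * x) \<noteq> 0" by (rule sin_pix_nz[OF assms False])
    have P: "(\<lambda>n. (\<Prod>k=1..n. 1 - x^2 / of_nat k^2)) \<longlonglongrightarrow> sin (pi * x) / (pi * x)"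
      by (rule sin_product_formula_real'[OF False])
    have "(\<lambda>M. inverse ((\<Prod>k=1..M. 4*real k^2 / (4*real k^2 - 1)) * (\<Prod>k=1..M. 1 - x^2 / real k^2)))
        \<longlonglongrightarrow> inverse (pi / 2 * (sin (pi * x) / (pi * x)))"
      by (rule tendsto_inverse[OF tendsto_mult[OF W P]]) (use s False in simp)
    moreover have "inverse (pi / 2 * (sin (pi * x) / (pi * x))) = FF x"
      using False s by (simp add: FF_def field_simps)
    moreover have "(\<lambda>M. Lam M x) = (\<lambda>M. inverse ((\<Prod>k=1..M. 4*real k^2 / (4*real k^2 - 1)) * (\<Prod>k=1..M. 1 - x^2 / real k^2)))"
      by (rule ext, rule Lam_eq[OF x1])
    ultimately show ?thesis by metis
  qed
qed

lemma tt0_sums: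
  assumes "\<bar>x\<bar> \<le> 1/2"
  shows "tt 0 x sums FF x"
proof -
  have lim1: "(\<lambda>M. Lam M x * suminf (tt M x)) \<longlonglongrightarrow> FF x * 1"
    by (rule tendsto_mult[OF Lam_lim[OF assms] S_lim[OF assms]])
  have ev: "\<forall>\<^sub>F M in sequentially. Lam M x * suminf (tt M x) = suminf (tt 0 x)"
  proof -
    have "\<forall>\<^sub>F M in sequentially. 2 \<le> M" by (rule eventually_ge_at_top)
    then show ?thesis
    proof (rule eventually_mono)
      fix M :: nat assume "2 \<le> M"
      from sums_unique[OF sums_tt0[OF assms this]] show "Lam M x * suminf (tt M x) = suminf (tt 0 x)" by simp
    qed
  qed
  have "(\<lambda>M. suminf (tt 0 x)) \<longlonglongrightarrow> FF x * 1"
    using lim1 by (subst (asm) tendsto_cong[OF ev])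
  then have e: "suminf (tt 0 x) = FF x" by (simp add: LIMSEQ_const_iff)
  have "summable (tt 0 x)" using sums_tt0[OF assms order.refl] by (rule sums_summable)
  then show ?thesis using e by (simp add: summable_sums_iff)
qed

definition psi :: "real \<Rightarrow> nat \<Rightarrow> real" where
  "psi x k = - (real k + 3/4) / ((real k + 1/2)^2 * ((real k + 1)^2 - x^2))"

definition phi :: "real \<Rightarrow> nat \<Rightarrow> real" where
  "phi x k = 1 + x^2 * psi x k"

definition rr :: "real \<Rightarrow> nat \<Rightarrow> real" where
  "rr x k = (\<Prod>j<k. phi x j)"

lemma frac_eqI: "b \<noteq> 0 \<Longrightarrow> d \<noteq> 0 \<Longrightarrow> a * d = c * b \<Longrightarrow> a / b = c / (d::real)"
  by (simp add: frac_eq_eq)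

lemma x_sq_le: "\<bar>x::real\<bar> \<le> 1/2 \<Longrightarrow> x^2 \<le> 1/4"
proof -
  assume "\<bar>x\<bar> \<le> 1/2"
  then have "\<bar>x\<bar>^2 \<le> (1/2)^2" by (intro power_mono) auto
  then show ?thesis by (simp add: power2_eq_square)
qed

lemma den_pos:
  assumes "\<bar>x\<bar> \<le> 1/2"
  shows "0 < (real k + 1)^2 - x^2"
proof -
  have "1 \<le> (real k + 1)^2" by (rule one_le_power) simp
  then show ?thesis using x_sq_le[OF assms] by linarith
qed

lemma phi_frac:
  assumes "\<bar>x\<bar> \<le> 1/2"
  shows "phi x k = ((real k + 1/2)^2 - x^2) * (real k + 1)^2 / ((real k + 1/2)^2 * ((real k + 1)^2 - x^2))"
proof -
  define D where "D = (real k + 1/2)^2 * ((real k + 1)^2 - x^2)"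
  have D0: "D \<noteq> 0" unfolding D_def using den_pos[OF assms, of k] by simp
  have "phi x k = (D - x^2 * (real k + 3/4)) / D"
    unfolding phi_def psi_def D_def[symmetric] using D0 by (simp add: field_simps)
  also have "D - x^2 * (real k + 3/4) = ((real k + 1/2)^2 - x^2) * (real k + 1)^2"
    unfolding D_def by algebra
  finally show ?thesis unfolding D_def .
qed

lemma rho_0_split:
  assumes "\<bar>x\<bar> \<le> 1/2"
  shows "rho 0 x k = rho 0 0 k * phi x k"
proof -
  have d1: "(real k + 1) * (1 - x + real k) * (1 + x + real k) \<noteq> 0" using assms by (auto simp: abs_le_iff)
  have d2: "(real k + 1) * (1 + real k) * (1 + real k) * ((real k + 1/2)^2 * ((real k + 1)^2 - x^2)) \<noteq> 0"
    using den_pos[OF assms, of k] by simp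
  have "rho 0 0 k * phi x k = ((1/2 + real k) * (1/2 + real k) * (1/2 + real k) * (((real k + 1/2)^2 - x^2) * (real k + 1)^2))
     / ((real k + 1) * (1 + real k) * (1 + real k) * ((real k + 1/2)^2 * ((real k + 1)^2 - x^2)))"
    unfolding phi_frac[OF assms] rho_def by (simp add: add_ac)
  also have "\<dots> = (1/2 + real k) * (1/2 + x + real k) * (1/2 - x + real k) / ((real k + 1) * (1 - x + real k) * (1 + x + real k))"
    by (rule frac_eqI[OF d2 d1]) algebra
  also have "\<dots> = rho 0 x k" unfolding rho_def by (simp add: add_ac)
  finally show ?thesis by simp
qed

lemma E00_pos: "0 < E 0 0 k"
proof (induction k)
  case (Suc k)
  have "rho 0 0 k > 0" unfolding rho_def by (intro divide_pos_pos mult_pos_pos) auto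
  then show ?case using Suc E_Suc'[of 0 0 k] by simp
qed simp

lemma E0_rr:
  assumes "\<bar>x\<bar> \<le> 1/2"
  shows "E 0 x k = E 0 0 k * rr x k"
proof (induction k)
  case 0
  then show ?case by (simp add: rr_def)
next
  case (Suc k)
  have x1: "\<bar>x\<bar> < 1" using assms by simp
  have "E 0 x (Suc k) = E 0 x k * rho 0 x k" by (rule E_Suc'[OF x1])
  also have "\<dots> = E 0 0 k * rr x k * (rho 0 0 k * phi x k)" using Suc rho_0_split[OF assms] by simp
  also have "\<dots> = (E 0 0 k * rho 0 0 k) * (rr x k * phi x k)" by (simp add: mult_ac)
  also have "E 0 0 k * rho 0 0 k = E 0 0 (Suc k)" using E_Suc'[of 0 0 k] by simp
  also have "rr x k * phi x k = rr x (Suc k)" by (simp add: rr_def)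
  finally show ?case .
qed

definition cc :: "nat \<Rightarrow> real" where "cc k = tt 0 0 k"

lemma tt0_rr:
  assumes "\<bar>x\<bar> \<le> 1/2"
  shows "tt 0 x k = cc k * rr x k"
  unfolding cc_def tt_def E0_rr[OF assms] by simp

lemma psi_nonpos: "\<bar>x\<bar> \<le> 1/2 \<Longrightarrow> psi x k \<le> 0"
  unfolding psi_def using den_pos[of x k] by (intro divide_nonpos_pos) auto

lemma phi_nonneg:
  assumes "\<bar>x\<bar> \<le> 1/2" shows "0 \<le> phi x k"
proof -
  have "(1/2)^2 \<le> (real k + 1/2)^2" by (intro power_mono) auto
  then have n: "0 \<le> (real k + 1/2)^2 - x^2" using x_sq_le[OF assms] by (simp add: power2_eq_square)
  have d: "0 < (real k + 1/2)^2 * ((real k + 1)^2 - x^2)" using den_pos[OF assms, of k] by simp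
  show ?thesis unfolding phi_frac[OF assms] using n d by simp
qed

lemma phi_le1: "\<bar>x\<bar> \<le> 1/2 \<Longrightarrow> phi x k \<le> 1"
  unfolding phi_def using psi_nonpos[of x k] by (simp add: mult_nonneg_nonpos)

lemma rr_bounds: "\<bar>x\<bar> \<le> 1/2 \<Longrightarrow> 0 \<le> rr x k \<and> rr x k \<le> 1"
  unfolding rr_def by (intro conjI prod_nonneg prod_le_1) (auto simp: phi_nonneg phi_le1)

lemma psi_bound:
  assumes "\<bar>x\<bar> \<le> 1/2"
  shows "\<bar>psi x k\<bar> \<le> 6 / (real k + 1)^2"
proof -
  define t where "t = real k"
  have t0: "0 \<le> t" by (simp add: t_def)
  have "(t + 1)^2 - x^2 - (t + 1/2) * (t + 3/2) = 1/4 - x^2" by algebra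
  then have D1: "(t + 1/2) * (t + 3/2) \<le> (t + 1)^2 - x^2" using x_sq_le[OF assms] by linarith
  have p: "0 < (t + 1/2)^2 * ((t + 1/2) * (t + 3/2))" using t0 by simp
  have "\<bar>psi x k\<bar> = (t + 3/4) / ((t + 1/2)^2 * ((t + 1)^2 - x^2))"
    unfolding psi_def t_def[symmetric] using den_pos[OF assms, of k] t0 by (simp add: t_def abs_div)
  also have "\<dots> \<le> (t + 3/4) / ((t + 1/2)^2 * ((t + 1/2) * (t + 3/2)))"
    using D1 p t0 den_pos[OF assms, of k] by (intro divide_left_mono mult_left_mono mult_pos_pos) (auto simp: t_def)
  also have "\<dots> \<le> 6 / (t + 1)^2"
  proof (rule div_le_div_cross)
    show "0 < (t + 1/2)^2 * ((t + 1/2) * (t + 3/2))" by (rule p)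
    show "0 < (t + 1)^2" using t0 by simp
    have "6 * ((t + 1/2)^2 * ((t + 1/2) * (t + 3/2))) - (t + 3/4) * (t + 1)^2 = 6 * t^4 + 17 * t^3 + 61/4 * t^2 + 5 * t + 3/8"
      by algebra
    moreover have "0 \<le> 6 * t^4 + 17 * t^3 + 61/4 * t^2 + 5 * t + 3/8" using t0 by simp
    ultimately show "(t + 3/4) * (t + 1)^2 \<le> 6 * ((t + 1/2)^2 * ((t + 1/2) * (t + 3/2)))" by linarith
  qed
  finally show ?thesis by (simp add: t_def)
qed

definition TT :: "nat \<Rightarrow> real" where "TT k = FF 0 - (\<Sum>j<k. cc j)"

lemma TT_lim: "TT \<longlonglongrightarrow> 0"
proof -
  have "(\<lambda>N. \<Sum>j<N. cc j) \<longlonglongrightarrow> FF 0"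
    using tt0_sums[of 0] unfolding sums_def cc_def by simp
  then have "(\<lambda>N. FF 0 - (\<Sum>j<N. cc j)) \<longlonglongrightarrow> FF 0 - FF 0" by (intro tendsto_intros)
  then show ?thesis unfolding TT_def by simp
qed

lemma TT_bound: obtains B where "0 < B" "\<And>k. \<bar>TT k\<bar> \<le> B"
proof -
  have "Bseq TT" using TT_lim by (intro convergent_imp_Bseq) (auto simp: convergent_def)
  then show ?thesis using that by (elim BseqE) auto
qed

lemma sbp:
  "(\<Sum>k<N. cc k * V k) = (\<Sum>k<N. TT (Suc k) * (V (Suc k) - V k)) + TT 0 * V 0 - TT N * V N"
proof (induction N)
  case 0
  then show ?case by simp
next
  case (Suc N)
  have c: "cc N = TT N - TT (Suc N)" by (simp add: TT_def)
  show ?case using Suc by (simp add: c algebra_simps)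
qed

lemma rr_Suc: "rr x (Suc k) - rr x k = x^2 * (rr x k * psi x k)"
  by (simp add: rr_def phi_def algebra_simps)

definition gg :: "real \<Rightarrow> real" where "gg x = (\<Sum>k. TT (Suc k) * rr x k * psi x k)"

lemma gg_unif:
  obtains B where "0 < B" "\<And>k x. \<bar>x\<bar> \<le> 1/2 \<Longrightarrow> norm (TT (Suc k) * rr x k * psi x k) \<le> B * (6 / (real k + 1)^2)"
proof -
  obtain B where B: "0 < B" "\<And>k. \<bar>TT k\<bar> \<le> B" using TT_bound by blast
  have "norm (TT (Suc k) * rr x k * psi x k) \<le> B * (6 / (real k + 1)^2)" if x: "\<bar>x\<bar> \<le> 1/2" for k x
  proof -
    have "norm (TT (Suc k) * rr x k * psi x k) = \<bar>TT (Suc k)\<bar> * \<bar>rr x k\<bar> * \<bar>psi x k\<bar>" by (simp add: abs_mult)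
    also have "\<dots> \<le> B * 1 * (6 / (real k + 1)^2)"
      using B rr_bounds[OF x, of k] psi_bound[OF x, of k]
      by (intro mult_mono) auto
    finally show ?thesis by simp
  qed
  then show ?thesis using that B by blast
qed

lemma gg_summable: "\<bar>x\<bar> \<le> 1/2 \<Longrightarrow> summable (\<lambda>k. TT (Suc k) * rr x k * psi x k)"
proof -
  assume x: "\<bar>x\<bar> \<le> 1/2"
  obtain B where B: "0 < B" "\<And>k x. \<bar>x\<bar> \<le> 1/2 \<Longrightarrow> norm (TT (Suc k) * rr x k * psi x k) \<le> B * (6 / (real k + 1)^2)"
    using gg_unif by blast
  have "summable (\<lambda>k. B * (6 / (real k + 1)^2))"
    using inv_sq_summable by (intro summable_mult summable_mult) (simp add: summable_mult[of _ 6] divide_inverse)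
  then show ?thesis by (rule summable_comparison_test') (use B(2)[OF x] in auto)
qed

lemma FF_eq:
  assumes x: "\<bar>x\<bar> \<le> 1/2"
  shows "FF x = x^2 * gg x + FF 0"
proof -
  have e: "(\<Sum>k<N. tt 0 x k) = x^2 * (\<Sum>k<N. TT (Suc k) * rr x k * psi x k) + TT 0 - TT N * rr x N" for N
  proof -
    have "(\<Sum>k<N. tt 0 x k) = (\<Sum>k<N. cc k * rr x k)" using tt0_rr[OF x] by simp
    also have "\<dots> = (\<Sum>k<N. TT (Suc k) * (rr x (Suc k) - rr x k)) + TT 0 * rr x 0 - TT N * rr x N"
      by (rule sbp)
    also have "(\<Sum>k<N. TT (Suc k) * (rr x (Suc k) - rr x k)) = x^2 * (\<Sum>k<N. TT (Suc k) * rr x k * psi x k)"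
      by (simp add: rr_Suc sum_distrib_left mult_ac)
    finally show ?thesis by (simp add: rr_def)
  qed
  have l1: "(\<lambda>N. \<Sum>k<N. tt 0 x k) \<longlonglongrightarrow> FF x" using tt0_sums[OF x] by (simp add: sums_def)
  have t2: "(\<lambda>N. TT N * rr x N) \<longlonglongrightarrow> 0"
  proof (rule Lim_null_comparison)
    show "\<forall>\<^sub>F N in sequentially. norm (TT N * rr x N) \<le> \<bar>TT N\<bar>"
      using rr_bounds[OF x] by (intro always_eventually allI) (simp add: abs_mult mult_left_le)
    show "(\<lambda>N. \<bar>TT N\<bar>) \<longlonglongrightarrow> 0" using tendsto_rabs_zero[OF TT_lim] .
  qed
  have l2: "(\<lambda>N. x^2 * (\<Sum>k<N. TT (Suc k) * rr x k * psi x k) + TT 0 - TT N * rr x N) \<longlonglongrightarrow> x^2 * gg x + TT 0 - 0"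
    unfolding gg_def by (intro tendsto_diff tendsto_add tendsto_mult tendsto_const summable_LIMSEQ gg_summable[OF x] t2)
  have "FF x = x^2 * gg x + TT 0 - 0" using LIMSEQ_unique[OF l1] l2 e by simp
  then show ?thesis by (simp add: TT_def)
qed

lemma gg_cont_on: "continuous_on (ball 0 (1/2)) gg"
proof -
  obtain B where B: "0 < B" "\<And>k x. \<bar>x\<bar> \<le> 1/2 \<Longrightarrow> norm (TT (Suc k) * rr x k * psi x k) \<le> B * (6 / (real k + 1)^2)"
    using gg_unif by blast
  have sm: "summable (\<lambda>k. B * (6 / (real k + 1)^2))"
    using inv_sq_summable by (intro summable_mult summable_mult) (simp add: summable_mult[of _ 6] divide_inverse)
  have ul: "uniform_limit (ball 0 (1/2)) (\<lambda>n x. \<Sum>k<n. TT (Suc k) * rr x k * psi x k) (\<lambda>x. \<Sum>k. TT (Suc k) * rr x k * psi x k) sequentially"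
    by (rule Weierstrass_m_test[OF _ sm]) (use B(2) in \<open>auto simp: dist_real_def\<close>)
  have cont: "continuous_on (ball 0 (1/2)) (\<lambda>x. \<Sum>k<n. TT (Suc k) * rr x k * psi x k)" for n
  proof -
    have dnz: "(real k + 1/2)^2 * ((real k + 1)^2 - x^2) \<noteq> 0" if "x \<in> ball 0 (1/2)" for x :: real and k
      using den_pos[of x k] that by (simp add: dist_real_def)
    show ?thesis unfolding rr_def phi_def psi_def
      by (intro continuous_intros) (use dnz in auto)
  qed
  show ?thesis unfolding gg_def
    by (rule uniform_limit_theorem[OF _ ul]) (use cont in auto)
qed

lemma gg0_val: "gg 0 = pi / 3"
proof -
  have "isCont gg 0" using gg_cont_on continuous_on_eq_continuous_at[of "ball 0 (1/2)" gg] by simp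
  then have l1: "(gg \<longlongrightarrow> gg 0) (at 0)" by (simp add: isCont_def)
  have ev: "\<forall>\<^sub>F x in at (0::real). 2 * pi * ((pi * x / sin (pi * x) - 1) / (pi * x)^2) = gg x"
  proof -
    have P: "2 * pi * ((pi * x / sin (pi * x) - 1) / (pi * x)^2) = gg x" if "x \<noteq> 0" "dist x 0 < 1/2" for x :: real
    proof -
      have x: "x \<noteq> 0" "\<bar>x\<bar> \<le> 1/2" using that by (auto simp: dist_real_def)
      have s: "sin (pi * x) \<noteq> 0" by (rule sin_pix_nz[OF x(2) x(1)])
      have "FF x = x^2 * gg x + FF 0" by (rule FF_eq[OF x(2)])
      then have "gg x = (2 * x / sin (pi * x) - 2 / pi) / x^2" using x by (simp add: FF_def field_simps)
      also have "\<dots> = 2 * pi * ((pi * x / sin (pi * x) - 1) / (pi * x)^2)"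
        using x s by (simp add: field_simps power2_eq_square)
      finally show ?thesis by simp
    qed
    show ?thesis unfolding eventually_at by (intro exI[of _ "1/2"]) (use P in auto)
  qed
  have a1: "((\<lambda>y::real. (y / sin y - 1) / y^2) \<longlongrightarrow> 1/6) (at 0)" by real_asymp
  have a2: "filterlim (\<lambda>x::real. pi * x) (at 0) (at 0)" by real_asymp
  have l2: "((\<lambda>x::real. 2 * pi * ((pi * x / sin (pi * x) - 1) / (pi * x)^2)) \<longlongrightarrow> 2 * pi * (1/6)) (at 0)"
    by (rule tendsto_mult_left[OF filterlim_compose[OF a1 a2, unfolded o_def]])
  have l3: "(gg \<longlongrightarrow> pi / 3) (at 0)" using l2 tendsto_cong[OF ev] by simp
  show ?thesis using tendsto_unique[OF _ l1 l3] by simp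
qed

definition hh :: "nat \<Rightarrow> real" where "hh k = (\<Sum>j<k. psi 0 j)"

lemma rr0: "rr 0 k = 1" by (simp add: rr_def phi_def)

lemma hh_bound: "\<bar>hh N\<bar> \<le> pi^2"
proof -
  have "\<bar>hh N\<bar> \<le> (\<Sum>j<N. \<bar>psi 0 j\<bar>)" unfolding hh_def by (rule sum_abs)
  also have "\<dots> \<le> (\<Sum>j<N. 6 * (1 / (real j + 1)^2))" by (intro sum_mono) (use psi_bound[of 0] in simp)
  also have "\<dots> = 6 * (\<Sum>j<N. 1 / (real j + 1)^2)" by (simp add: sum_distrib_left)
  also have "\<dots> \<le> 6 * (\<Sum>j. 1 / (real j + 1)^2)"
    by (intro mult_left_mono sum_le_suminf inv_sq_summable) auto
  also have "\<dots> = pi^2" by (simp add: inv_sq_suminf)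
  finally show ?thesis .
qed

lemma gg0_lim: "(\<lambda>N. \<Sum>k<N. cc k * hh k) \<longlonglongrightarrow> gg 0"
proof -
  have e: "(\<Sum>k<N. cc k * hh k) = (\<Sum>k<N. TT (Suc k) * rr 0 k * psi 0 k) - TT N * hh N" for N
    using sbp[where V=hh and N=N] by (simp add: hh_def rr0)
  have t2: "(\<lambda>N. TT N * hh N) \<longlonglongrightarrow> 0"
  proof (rule Lim_null_comparison)
    show "\<forall>\<^sub>F N in sequentially. norm (TT N * hh N) \<le> \<bar>TT N\<bar> * pi^2"
      using hh_bound by (intro always_eventually allI) (simp add: abs_mult mult_left_mono)
    show "(\<lambda>N. \<bar>TT N\<bar> * pi^2) \<longlonglongrightarrow> 0" by (intro tendsto_mult_left_zero tendsto_rabs_zero TT_lim)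
  qed
  have "(\<lambda>N. (\<Sum>k<N. TT (Suc k) * rr 0 k * psi 0 k) - TT N * hh N) \<longlonglongrightarrow> gg 0 - 0"
    unfolding gg_def by (intro tendsto_diff summable_LIMSEQ gg_summable t2) simp
  then show ?thesis using e by simp
qed

lemma hh_Hs: "hh k = 4 * (\<Sum>i=1..2*k. (-1::real)^i / (real i)^2)"
proof (induction k)
  case 0
  then show ?case by (simp add: hh_def)
next
  case (Suc k)
  have f1: "(-1::real)^(Suc (2*k)) / (real (Suc (2*k)))^2 = - 1 / (2 * real k + 1)^2" by simp
  have f2: "(-1::real)^(Suc (Suc (2*k))) / (real (Suc (Suc (2*k))))^2 = 1 / (2 * real k + 2)^2" by simp
  have s: "(\<Sum>i=1..2*Suc k. (-1::real)^i / (real i)^2) = (\<Sum>i=1..2*k. (-1::real)^i / (real i)^2)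
      + (- 1 / (2 * real k + 1)^2 + 1 / (2 * real k + 2)^2)"
  proof -
    have "2 * Suc k = Suc (Suc (2*k))" by simp
    then show ?thesis using f1 f2 by (simp add: sum.cl_ivl_Suc add.commute)
  qed
  have p: "psi 0 k = 4 * (- 1 / (2 * real k + 1)^2 + 1 / (2 * real k + 2)^2)"
  proof -
    have "- 1 / (2 * real k + 1)^2 + 1 / (2 * real k + 2)^2 = ((2 * real k + 1)^2 - (2 * real k + 2)^2) / ((2 * real k + 1)^2 * (2 * real k + 2)^2)"
      by (simp add: field_simps)
    also have "\<dots> = - (real k + 3/4) / (4 * ((real k + 1/2)^2 * ((real k + 1)^2 - 0^2)))"
      by (rule frac_eqI) (simp_all, algebra)
    finally have X: "- 1 / (2 * real k + 1)^2 + 1 / (2 * real k + 2)^2 = - (real k + 3/4) / (4 * ((real k + 1/2)^2 * ((real k + 1)^2 - 0^2)))" .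
    have "psi 0 k = 4 * (- (real k + 3/4) / (4 * ((real k + 1/2)^2 * ((real k + 1)^2 - 0^2))))"
    proof -
      have g: "\<And>(a::real) D. 4 * (a / (4 * D)) = a / D" by simp
      show ?thesis by (subst g) (simp add: psi_def)
    qed
    with X show ?thesis by simp
  qed
  have "hh (Suc k) = hh k + psi 0 k" by (simp add: hh_def)
  then show ?case using Suc s p by (simp add: algebra_simps)
qed

lemma cc_form: "cc k = (-1)^k * (4 * real k + 1) * (pochhammer (1/2) k)^3 / (fact k)^3"
  unfolding cc_def tt_def E_def by (simp add: pochhammer_fact[symmetric] power3_eq_cube field_simps)

theorem theorem1p1:
  shows "(\<lambda>n. \<Sum>k=1..n. (-1::real)^k * (4 * real k + 1)
            * (pochhammer (1/2) k)^3 / (fact k)^3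
            * (\<Sum>i=1..2*k. (-1::real)^i / (real i)^2))
         \<longlonglongrightarrow> pi / 12"
proof -
  define f where "f k = cc k * hh k" for k
  have e: "(\<Sum>k=1..n. (-1::real)^k * (4 * real k + 1) * (pochhammer (1/2) k)^3 / (fact k)^3
            * (\<Sum>i=1..2*k. (-1::real)^i / (real i)^2)) = (1/4) * (\<Sum>k<Suc n. f k)" for n
  proof (induction n)
    case 0
    then show ?case by (simp add: f_def hh_def)
  next
    case (Suc n)
    have "f (Suc n) = 4 * ((-1::real)^Suc n * (4 * real (Suc n) + 1) * (pochhammer (1/2) (Suc n))^3 / (fact (Suc n))^3
            * (\<Sum>i=1..2*Suc n. (-1::real)^i / (real i)^2))"
      unfolding f_def cc_form hh_Hs by (simp add: mult_ac)
    then show ?case using Suc by (simp add: sum.cl_ivl_Suc del: of_nat_Suc)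
  qed
  have "(\<lambda>n. (1/4) * (\<Sum>k<Suc n. f k)) \<longlonglongrightarrow> (1/4) * gg 0"
    using LIMSEQ_Suc[OF gg0_lim] unfolding f_def by (intro tendsto_mult_left)
  then show ?thesis unfolding e gg0_val by simp
qed

end
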